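(* Let $\pi:(X,T)\to(Y,S)$ be a factor map and let $y_0\in\mathrm{Eq}(Y,S)$ be a minimal point of $(Y,S)$ such that $\pi^{-1}(y_0)=\{x_0\}$. Then $x_0\in\mathrm{Eq}_{\mathrm{syn}}(X,T)$. In particular, $(X,T)$ is not thickly sensitive.
   Context: Systems: compact metric space with continuous surjection; factor map: continuous surjection intertwining the maps. $\mathrm{Eq}(Y,S)$ is the set of equicontinuity points: $y$ such that for every $\varepsilon>0$ there is $\delta>0$ with $\varrho_Y(y,y')<\delta\Rightarrow\varrho_Y(S^ny,S^ny')<\varepsilon$ for all $n\in\mathbb N$. A point is minimal if it lies in a minimal subset (a nonempty closed invariant set all of whose orbits are dense in it). $S_T(U,\delta)=\{n\in\mathbb{N}:\exists x_1,x_2\in U,\ \varrho(T^nx_1,T^nx_2)>\delta\}$, $J_T(U,\delta)=\mathbb N\setminus S_T(U,\delta)$. $\mathrm{Eq}_{\mathrm{syn}}(X,T)$: points $x$ such that for every $\varepsilon>0$ there is a neighborhood $U$ of $x$ with $J_T(U,\varepsilon)$ syndetic (bounded gaps). Thickly sensitive: there is $\delta>0$ with $S_T(U,\delta)$ thick (arbitrarily long blocks of consecutive integers) for every opene $U$. *)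

theory Defs
  imports "HOL-Analysis.Analysis"
begin

definition tds :: "'a::metric_space set \<Rightarrow> ('a \<Rightarrow> 'a) \<Rightarrow> bool" where
  "tds X T \<longleftrightarrow> compact X \<and> continuous_on X T \<and> T ` X = X"

definition factor_map ::
  "'a::metric_space set \<Rightarrow> ('a \<Rightarrow> 'a) \<Rightarrow> 'b::metric_space set \<Rightarrow> ('b \<Rightarrow> 'b) \<Rightarrow> ('a \<Rightarrow> 'b) \<Rightarrow> bool" where
  "factor_map X T Y S \<pi> \<longleftrightarrow> tds X T \<and> tds Y S \<and> continuous_on X \<pi> \<and> \<pi> ` X = Y
     \<and> (\<forall>x\<in>X. \<pi> (T x) = S (\<pi> x))"

definition eq_points :: "'a::metric_space set \<Rightarrow> ('a \<Rightarrow> 'a) \<Rightarrow> 'a set" where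
  "eq_points Y S = {y\<in>Y. \<forall>\<epsilon>>0. \<exists>\<delta>>0. \<forall>y'\<in>Y. dist y y' < \<delta> \<longrightarrow>
      (\<forall>n::nat. dist ((S^^n) y) ((S^^n) y') < \<epsilon>)}"

definition orbit :: "('a \<Rightarrow> 'a) \<Rightarrow> 'a \<Rightarrow> 'a set" where
  "orbit S y = {(S^^n) y | n. True}"

definition minimal_subset :: "'a::metric_space set \<Rightarrow> ('a \<Rightarrow> 'a) \<Rightarrow> 'a set \<Rightarrow> bool" where
  "minimal_subset Y S M \<longleftrightarrow> M \<noteq> {} \<and> M \<subseteq> Y \<and> closed M \<and> S ` M \<subseteq> M
      \<and> (\<forall>y\<in>M. closure (orbit S y) = M)"

definition minimal_point :: "'a::metric_space set \<Rightarrow> ('a \<Rightarrow> 'a) \<Rightarrow> 'a \<Rightarrow> bool" where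
  "minimal_point Y S y \<longleftrightarrow> (\<exists>M. minimal_subset Y S M \<and> y \<in> M)"

definition S_set :: "('a::metric_space \<Rightarrow> 'a) \<Rightarrow> 'a set \<Rightarrow> real \<Rightarrow> nat set" where
  "S_set T U \<delta> = {n. \<exists>x1\<in>U. \<exists>x2\<in>U. dist ((T^^n) x1) ((T^^n) x2) > \<delta>}"

definition J_set :: "('a::metric_space \<Rightarrow> 'a) \<Rightarrow> 'a set \<Rightarrow> real \<Rightarrow> nat set" where
  "J_set T U \<delta> = UNIV - S_set T U \<delta>"

definition syndetic :: "nat set \<Rightarrow> bool" where
  "syndetic A \<longleftrightarrow> (\<exists>L>0. \<forall>n. \<exists>m\<in>A. n \<le> m \<and> m < n + L)"

definition thick :: "nat set \<Rightarrow> bool" where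
  "thick A \<longleftrightarrow> (\<forall>L. \<exists>n. {n..<n+L} \<subseteq> A)"

definition eq_syn_points :: "'a::metric_space set \<Rightarrow> ('a \<Rightarrow> 'a) \<Rightarrow> 'a set" where
  "eq_syn_points X T = {x\<in>X. \<forall>\<epsilon>>0. \<exists>U. openin (top_of_set X) U \<and> x \<in> U
      \<and> syndetic (J_set T U \<epsilon>)}"

definition thickly_sensitive :: "'a::metric_space set \<Rightarrow> ('a \<Rightarrow> 'a) \<Rightarrow> bool" where
  "thickly_sensitive X T \<longleftrightarrow> (\<exists>\<delta>>0. \<forall>U. openin (top_of_set X) U \<and> U \<noteq> {}
      \<longrightarrow> thick (S_set T U \<delta>))"

end

theory Submission
  imports Defs
begin

lemma iter_in: "T ` X \<subseteq> X \<Longrightarrow> x \<in> X \<Longrightarrow> (T^^n) x \<in> X"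
  by (induction n) auto

lemma iter_comm:
  assumes "T ` X \<subseteq> X" "\<forall>x\<in>X. \<pi> (T x) = S (\<pi> x)" "x \<in> X"
  shows "\<pi> ((T^^n) x) = (S^^n) (\<pi> x)"
  using assms proof (induction n)
  case (Suc n) then show ?case using iter_in[of T X x n] by simp
qed simp

lemma cont_iter: "continuous_on M S \<Longrightarrow> S ` M \<subseteq> M \<Longrightarrow> continuous_on M (S^^n)"
proof (induction n)
  case 0 then show ?case by (simp add: continuous_on_id)
next
  case (Suc n)
  have "continuous_on M (S \<circ> (S^^n))"
    apply (rule continuous_on_compose)
     apply (rule Suc.IH[OF Suc.prems])
    apply (rule continuous_on_subset[OF Suc.prems(1)])
    using iter_in[OF Suc.prems(2)] by auto
  then show ?case by (simp add: funpow_Suc_right o_def funpow_swap1)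
qed

lemma unif_rec:
  assumes M: "minimal_subset Y S M" and Yc: "compact Y" and Sc: "continuous_on Y S"
    and y: "y \<in> M" and r: "r > 0"
  shows "syndetic {n. dist ((S^^n) y) y < r}"
proof -
  have MY: "M \<subseteq> Y" and Mcl: "closed M" and SM: "S ` M \<subseteq> M"
    and dense: "\<forall>z\<in>M. closure (orbit S z) = M" using M unfolding minimal_subset_def by auto
  have Mc: "compact M" using compact_Int_closed[OF Yc Mcl] MY by (simp add: Int_absorb1)
  have cM: "continuous_on M (S^^n)" for n
    using cont_iter[OF continuous_on_subset[OF Sc MY] SM] .
  have "\<exists>A. open A \<and> A \<inter> M = (S^^n) -` ball y r \<inter> M" for n
    using cM[of n] unfolding continuous_on_open_invariant by auto
  then obtain G where O: "\<And>n. open (G n) \<and> G n \<inter> M = (S^^n) -` ball y r \<inter> M" by metis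
  have cov: "M \<subseteq> (\<Union>n\<in>UNIV. G n)"
  proof
    fix z assume z: "z \<in> M"
    then have "y \<in> closure (orbit S z)" using dense y by auto
    then obtain w where "w \<in> orbit S z" "dist w y < r" using r closure_approachable by metis
    then obtain n where "dist ((S^^n) z) y < r" unfolding orbit_def by auto
    then have "z \<in> G n" using O[of n] z by (auto simp: dist_commute)
    then show "z \<in> (\<Union>n\<in>UNIV. G n)" by auto
  qed
  obtain C where C: "finite C" "M \<subseteq> (\<Union>c\<in>C. G c)"
    using compactE_image[OF Mc, of UNIV G] O cov by (metis subset_UNIV)
  define L where "L = Suc (Max C)"
  show ?thesis unfolding syndetic_def
  proof (intro exI[of _ L] conjI allI)
    show "L > 0" by (simp add: L_def)
    fix k
    have "(S^^k) y \<in> M" using iter_in[OF SM y] .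
    then obtain c where c: "c \<in> C" "(S^^k) y \<in> G c" using C by auto
    then have "(S^^c) ((S^^k) y) \<in> ball y r" using O[of c] \<open>(S^^k) y \<in> M\<close> by auto
    then have "dist ((S^^(c+k)) y) y < r" by (simp add: funpow_add dist_commute)
    moreover have "c < L" using Max_ge[OF C(1) c(1)] by (simp add: L_def)
    ultimately show "\<exists>m\<in>{n. dist ((S^^n) y) y < r}. k \<le> m \<and> m < k + L"
      by (intro bexI[of _ "c+k"]) auto
  qed
qed

lemma fiber:
  fixes \<pi> :: "'a::metric_space \<Rightarrow> 'b::metric_space"
  assumes Xc: "compact X" and pc: "continuous_on X \<pi>" and F: "{x\<in>X. \<pi> x = y0} = {x0}"
    and e: "e > 0"
  shows "\<exists>\<eta>>0. \<forall>x\<in>X. dist (\<pi> x) y0 < \<eta> \<longrightarrow> dist x x0 < e"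
proof -
  define K where "K = X \<inter> {x. e \<le> dist x x0}"
  have "closed {x. e \<le> dist x x0}"
    by (intro closed_Collect_le continuous_intros)
  then have Kc: "compact K" unfolding K_def using compact_Int_closed[OF Xc] by blast
  have "compact (\<pi> ` K)"
    by (rule compact_continuous_image[OF continuous_on_subset[OF pc]]) (use Kc K_def in auto)
  then have cl: "closed (\<pi> ` K)" by (rule compact_imp_closed)
  have "y0 \<notin> \<pi> ` K"
  proof
    assume "y0 \<in> \<pi> ` K"
    then obtain x where "x \<in> K" "\<pi> x = y0" by auto
    then have "x = x0" using F unfolding K_def by blast
    with \<open>x \<in> K\<close> e show False unfolding K_def by auto
  qed
  then obtain \<eta> where "\<eta> > 0" "ball y0 \<eta> \<subseteq> - (\<pi> ` K)"
  proof -
    have "open (- (\<pi> ` K))" using cl by (simp add: open_Compl)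
    then show ?thesis using that \<open>y0 \<notin> \<pi> ` K\<close> open_contains_ball[of "- (\<pi> ` K)"] by blast
  qed
  then show ?thesis
    by (intro exI[of _ \<eta>]) (force simp: K_def dist_commute not_le)
qed

theorem lemma4p1:
  fixes X :: "'a::metric_space set" and T :: "'a \<Rightarrow> 'a"
    and Y :: "'b::metric_space set" and S :: "'b \<Rightarrow> 'b"
    and \<pi> :: "'a \<Rightarrow> 'b" and x0 :: 'a and y0 :: 'b
  assumes "factor_map X T Y S \<pi>"
    and "y0 \<in> eq_points Y S"
    and "minimal_point Y S y0"
    and "{x\<in>X. \<pi> x = y0} = {x0}"
  shows "x0 \<in> eq_syn_points X T \<and> \<not> thickly_sensitive X T"
proof -
  have Xc: "compact X" and TX: "T ` X \<subseteq> X" and Yc: "compact Y" and Sc: "continuous_on Y S"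
    and pc: "continuous_on X \<pi>" and pY: "\<pi> ` X = Y" and comm: "\<forall>x\<in>X. \<pi> (T x) = S (\<pi> x)"
    using assms(1) unfolding factor_map_def tds_def by auto
  have x0: "x0 \<in> X" "\<pi> x0 = y0" using assms(4) by auto
  obtain M where M: "minimal_subset Y S M" "y0 \<in> M" using assms(3) unfolding minimal_point_def by blast
  have eqp: "\<forall>\<epsilon>>0. \<exists>\<delta>>0. \<forall>y'\<in>Y. dist y0 y' < \<delta> \<longrightarrow> (\<forall>n. dist ((S^^n) y0) ((S^^n) y') < \<epsilon>)"
    using assms(2) unfolding eq_points_def by auto
  have main: "\<exists>U. openin (top_of_set X) U \<and> x0 \<in> U \<and> syndetic (J_set T U e)" if e: "e > 0" for e
  proof -
    obtain \<eta> where eta: "\<eta> > 0" "\<forall>x\<in>X. dist (\<pi> x) y0 < \<eta> \<longrightarrow> dist x x0 < e/2"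
      using fiber[OF Xc pc assms(4), of "e/2"] e by auto
    obtain \<delta> where d: "\<delta> > 0" "\<forall>y'\<in>Y. dist y0 y' < \<delta> \<longrightarrow> (\<forall>n. dist ((S^^n) y0) ((S^^n) y') < \<eta>/2)"
      using eqp eta(1) by (meson half_gt_zero)
    define U where "U = X \<inter> \<pi> -` ball y0 \<delta>"
    have "openin (top_of_set X) U" unfolding U_def
      by (rule continuous_openin_preimage_gen[OF pc open_ball])
    moreover have "x0 \<in> U" using x0 d(1) by (simp add: U_def)
    moreover have "{n. dist ((S^^n) y0) y0 < \<eta>/2} \<subseteq> J_set T U e"
    proof
      fix n assume n: "n \<in> {n. dist ((S^^n) y0) y0 < \<eta>/2}"
      have close: "dist ((T^^n) x) x0 < e/2" if x: "x \<in> U" for x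
      proof -
        have xX: "x \<in> X" and dx: "dist y0 (\<pi> x) < \<delta>" using x by (auto simp: U_def)
        have "\<pi> x \<in> Y" using pY xX by auto
        then have "dist ((S^^n) y0) ((S^^n) (\<pi> x)) < \<eta>/2" using d dx by auto
        then have "dist ((S^^n) (\<pi> x)) y0 < \<eta>" using n dist_triangle[of "(S^^n) (\<pi> x)" y0 "(S^^n) y0"]
          by (simp add: dist_commute)
        then have "dist (\<pi> ((T^^n) x)) y0 < \<eta>" using iter_comm[OF TX comm xX] by simp
        then show ?thesis using eta(2) iter_in[OF TX xX] by auto
      qed
      have "\<not> dist ((T^^n) x1) ((T^^n) x2) > e" if "x1 \<in> U" "x2 \<in> U" for x1 x2
        using close[OF that(1)] close[OF that(2)] dist_triangle[of "(T^^n) x1" "(T^^n) x2" x0]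
        by (simp add: dist_commute)
      then show "n \<in> J_set T U e" unfolding J_set_def S_set_def by auto
    qed
    moreover have "syndetic {n. dist ((S^^n) y0) y0 < \<eta>/2}"
      using unif_rec[OF M(1) Yc Sc M(2), of "\<eta>/2"] eta(1) by simp
    ultimately show ?thesis unfolding syndetic_def by (meson subsetD)
  qed
  have A: "x0 \<in> eq_syn_points X T" using main x0 unfolding eq_syn_points_def by auto
  have B: "\<not> thickly_sensitive X T"
  proof
    assume "thickly_sensitive X T"
    then obtain \<delta> where d: "\<delta> > 0" "\<forall>U. openin (top_of_set X) U \<and> U \<noteq> {} \<longrightarrow> thick (S_set T U \<delta>)"
      unfolding thickly_sensitive_def by auto
    obtain U where U: "openin (top_of_set X) U" "x0 \<in> U" "syndetic (J_set T U \<delta>)" using main d(1) by auto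
    then have "thick (S_set T U \<delta>)" using d(2) by auto
    obtain L where L: "\<forall>n. \<exists>m\<in>J_set T U \<delta>. n \<le> m \<and> m < n + L" using U(3) syndetic_def by auto
    obtain n where "{n..<n+L} \<subseteq> S_set T U \<delta>" using \<open>thick _\<close> thick_def by blast
    moreover obtain m where "m \<in> J_set T U \<delta>" "n \<le> m" "m < n + L" using L by blast
    ultimately show False unfolding J_set_def by auto
  qed
  show ?thesis using A B by auto
qed

end
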